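(* Let $k[X,Y]$ be the polynomial ring over a field $k$, let $\ell\ge 3$, and set $R = k[X,Y]/(Y^\ell)$, with $x,y$ the images of $X,Y$ in $R$; let $D = k[x] \subseteq R$. For each integer $n>0$ let $z_n = y/x^n \in \mathrm{Q}(R)$ and $S_n = D[z_n]$. Then $R \subseteq S_n \subseteq \overline R$, and the strict closure $R^*$ of $R$ in $S_n$ equals $$R^* = R + D\frac{y^2}{x^n} + D\frac{y^3}{x^{2n}} + \cdots + D\frac{y^{\ell-1}}{x^{(\ell-2)n}}.$$
   Context: $\mathrm{Q}(R)$ denotes the total ring of fractions of $R$ (here $x$ is a non-zerodivisor of $R$) and $\overline R$ the integral closure of $R$ in $\mathrm{Q}(R)$. For an extension of commutative rings $R \subseteq S$, the strict closure of $R$ in $S$ is $R^* = \{\alpha \in S \mid \alpha\otimes 1 = 1\otimes \alpha \text{ in } S\otimes_R S\}$. *)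

theory Defs
  imports "HOL-Algebra.Ring" "HOL-Computational_Algebra.Polynomial"
          "HOL-Computational_Algebra.Fraction_Field"
begin

text \<open>Model of the total ring of fractions Q(R) of R = k[X,Y]/(Y^l):
  Q(R) = k(x)[y]/(y^l), elements represented by polynomials in y of degree < l
  over the fraction field k(x) = 'k poly fract, multiplication taken mod y^l.\<close>

definition Qring :: "nat \<Rightarrow> ('k::field poly fract poly) ring" where
  "Qring l = \<lparr>carrier = {p. degree p < l},
              monoid.mult = (\<lambda>p q. (p * q) mod monom 1 l),
              monoid.one = 1, ring.zero = 0, ring.add = (+)\<rparr>"

text \<open>The map k[X,Y] \<rightarrow> Q(R). Bivariate polynomials are 'k poly poly:
  outer variable Y, inner variable X.\<close>
definition embR :: "nat \<Rightarrow> 'k::field poly poly \<Rightarrow> 'k poly fract poly" where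
  "embR l P = map_poly (\<lambda>c. Fract c 1) P mod monom 1 l"

definition Rsub :: "nat \<Rightarrow> 'k::field poly fract poly set" where
  "Rsub l = range (embR l)"

definition xQ :: "nat \<Rightarrow> 'k::field poly fract poly" where
  "xQ l = embR l [:[:0, 1:]:]"

definition yQ :: "nat \<Rightarrow> 'k::field poly fract poly" where
  "yQ l = embR l [:0, 1:]"

definition Dsub :: "nat \<Rightarrow> 'k::field poly fract poly set" where
  "Dsub l = embR l ` {[:c:] | c. True}"

definition zQ :: "nat \<Rightarrow> nat \<Rightarrow> 'k::field poly fract poly" where
  "zQ l n = yQ l \<otimes>\<^bsub>Qring l\<^esub> inv\<^bsub>Qring l\<^esub> (xQ l [^]\<^bsub>Qring l\<^esub> n)"

definition Salg :: "nat \<Rightarrow> nat \<Rightarrow> 'k::field poly fract poly set" where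
  "Salg l n = {finsum (Qring l) (\<lambda>i. d i \<otimes>\<^bsub>Qring l\<^esub> (zQ l n [^]\<^bsub>Qring l\<^esub> (i::nat))) {..(m::nat)}
               | m d. \<forall>i. d i \<in> Dsub l}"

definition integral_closure :: "('a, 'b) ring_scheme \<Rightarrow> 'a set \<Rightarrow> 'a set" where
  "integral_closure A R = {a \<in> carrier A. \<exists>m c. (\<forall>i<m. c i \<in> R) \<and>
      a [^]\<^bsub>A\<^esub> m \<oplus>\<^bsub>A\<^esub> finsum A (\<lambda>i. c i \<otimes>\<^bsub>A\<^esub> (a [^]\<^bsub>A\<^esub> (i::nat))) {..<m} = \<zero>\<^bsub>A\<^esub>}"

text \<open>Tensor product S \<otimes>_R S (R \<subseteq> S subrings of A) by the standard construction:
  free abelian group on S \<times> S modulo the subgroup generated by the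
  bilinearity and R-balancedness relations.\<close>
definition tdelta :: "'a \<times> 'a \<Rightarrow> ('a \<times> 'a \<Rightarrow> int)" where
  "tdelta p = (\<lambda>q. if q = p then 1 else 0)"

definition fadd :: "('c \<Rightarrow> int) \<Rightarrow> ('c \<Rightarrow> int) \<Rightarrow> ('c \<Rightarrow> int)" where
  "fadd f g = (\<lambda>q. f q + g q)"

definition fsub :: "('c \<Rightarrow> int) \<Rightarrow> ('c \<Rightarrow> int) \<Rightarrow> ('c \<Rightarrow> int)" where
  "fsub f g = (\<lambda>q. f q - g q)"

inductive_set tensor_rels :: "('a, 'b) ring_scheme \<Rightarrow> 'a set \<Rightarrow> 'a set \<Rightarrow> ('a \<times> 'a \<Rightarrow> int) set"
  for A R S where
  zero: "(\<lambda>_. 0) \<in> tensor_rels A R S"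
| add: "f \<in> tensor_rels A R S \<Longrightarrow> g \<in> tensor_rels A R S \<Longrightarrow> fadd f g \<in> tensor_rels A R S"
| neg: "f \<in> tensor_rels A R S \<Longrightarrow> (\<lambda>q. - f q) \<in> tensor_rels A R S"
| addL: "s \<in> S \<Longrightarrow> s' \<in> S \<Longrightarrow> t \<in> S \<Longrightarrow>
     fsub (fsub (tdelta (s \<oplus>\<^bsub>A\<^esub> s', t)) (tdelta (s, t))) (tdelta (s', t)) \<in> tensor_rels A R S"
| addR: "s \<in> S \<Longrightarrow> t \<in> S \<Longrightarrow> t' \<in> S \<Longrightarrow>
     fsub (fsub (tdelta (s, t \<oplus>\<^bsub>A\<^esub> t')) (tdelta (s, t))) (tdelta (s, t')) \<in> tensor_rels A R S"
| scal: "r \<in> R \<Longrightarrow> s \<in> S \<Longrightarrow> t \<in> S \<Longrightarrow>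
     fsub (tdelta (r \<otimes>\<^bsub>A\<^esub> s, t)) (tdelta (s, r \<otimes>\<^bsub>A\<^esub> t)) \<in> tensor_rels A R S"

definition strict_closure :: "('a, 'b) ring_scheme \<Rightarrow> 'a set \<Rightarrow> 'a set \<Rightarrow> 'a set" where
  "strict_closure A R S = {\<alpha> \<in> S. fsub (tdelta (\<alpha>, \<one>\<^bsub>A\<^esub>)) (tdelta (\<one>\<^bsub>A\<^esub>, \<alpha>)) \<in> tensor_rels A R S}"

end

theory Submission
  imports Defs
begin

lemma coeff_mod_monom:
  "coeff (p mod monom (1::'a::field) l) j = (if j < l then coeff p j else 0)"
proof (cases "j < l")
  case True
  have e: "p = (p div monom 1 l) * monom 1 l + p mod monom 1 l" by (rule div_mult_mod_eq[symmetric])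
  have "coeff ((p div monom 1 l) * monom 1 l) j = 0"
    using True by (simp add: mult.commute[of _ "monom 1 l"] coeff_monom_mult)
  then have "coeff p j = coeff (p mod monom 1 l) j"
    by (subst e) (simp only: coeff_add, simp)
  then show ?thesis using True by simp
next
  case False
  have "monom (1::'a) l \<noteq> 0" by simp
  then have "p mod monom 1 l = 0 \<or> degree (p mod monom 1 l) < l"
    using degree_mod_less[of "monom (1::'a) l" p] by (simp add: degree_monom_eq)
  then have "coeff (p mod monom 1 l) j = 0"
  proof
    assume "p mod monom 1 l = 0" then show ?thesis by simp
  next
    assume "degree (p mod monom 1 l) < l" then show ?thesis using False by (intro coeff_eq_0) simp
  qed
  then show ?thesis using False by simp
qed

lemma mod_monom_id: "degree p < l \<Longrightarrow> p mod monom (1::'a::field) l = p"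
  by (rule mod_poly_less) (simp add: degree_monom_eq)

lemma degree_mod_monom: "0 < l \<Longrightarrow> degree (p mod monom (1::'a::field) l) < l"
proof -
  assume l: "0 < l"
  have "monom (1::'a) l \<noteq> 0" by simp
  then have "p mod monom 1 l = 0 \<or> degree (p mod monom 1 l) < l"
    using degree_mod_less[of "monom (1::'a) l" p] by (simp add: degree_monom_eq)
  then show ?thesis using l by auto
qed

lemma Qring_simps:
  "carrier (Qring l) = {p. degree p < l}"
  "p \<otimes>\<^bsub>Qring l\<^esub> q = (p * q) mod monom 1 l"
  "p \<oplus>\<^bsub>Qring l\<^esub> q = p + q"
  "\<one>\<^bsub>Qring l\<^esub> = 1"
  "\<zero>\<^bsub>Qring l\<^esub> = 0"
  by (simp_all add: Qring_def)

lemma Qring_cring: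
  assumes l: "0 < l" shows "cring (Qring l :: 'a::field poly fract poly ring)"
proof (rule cringI)
  show "abelian_group (Qring l :: 'a::field poly fract poly ring)"
    apply (rule abelian_groupI, simp_all add: Qring_simps l)
    subgoal for x y using degree_add_le_max[of x y] by linarith
    subgoal for x by (rule exI[of _ "-x"]) simp
    done
  show "comm_monoid (Qring l :: 'a::field poly fract poly ring)"
    apply (rule comm_monoidI, simp_all add: Qring_simps l degree_mod_monom mod_monom_id)
    subgoal for x y z by (simp only: mod_mult_left_eq mod_mult_right_eq mult.assoc)
    subgoal for x y by (simp add: mult.commute)
    done
  show "(x \<oplus>\<^bsub>Qring l\<^esub> y) \<otimes>\<^bsub>Qring l\<^esub> z = x \<otimes>\<^bsub>Qring l\<^esub> z \<oplus>\<^bsub>Qring l\<^esub> y \<otimes>\<^bsub>Qring l\<^esub> z" for x y z :: "'a poly fract poly"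
    by (simp add: Qring_simps distrib_right poly_mod_add_left)
qed


definition Xf :: "'a::field poly fract" where "Xf = Fract [:0,1:] 1"
definition isP :: "'a::field poly fract \<Rightarrow> bool" where "isP u \<longleftrightarrow> (\<exists>c. u = Fract c 1)"
definition divn :: "nat \<Rightarrow> 'a::field poly fract \<Rightarrow> bool" where
  "divn n u \<longleftrightarrow> (\<exists>c. u = Xf ^ n * Fract c 1)"

definition Sset :: "nat \<Rightarrow> nat \<Rightarrow> 'a::field poly fract poly set" where
  "Sset l n = {p. degree p < l \<and> (\<forall>j. isP (Xf ^ (n * j) * coeff p j))}"
definition Rset :: "nat \<Rightarrow> 'a::field poly fract poly set" where
  "Rset l = {p. degree p < l \<and> (\<forall>j. isP (coeff p j))}"
definition Tset :: "nat \<Rightarrow> nat \<Rightarrow> 'a::field poly fract poly set" where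
  "Tset l n = {p \<in> Sset l n. \<forall>j. 1 \<le> j \<longrightarrow> divn n (Xf ^ (n * j) * coeff p j)}"

lemma Xf_nz: "Xf \<noteq> 0"
  by (simp add: Xf_def Zero_fract_def eq_fract)

lemma isP_0 [simp]: "isP 0" by (auto simp: isP_def Zero_fract_def)
lemma isP_1 [simp]: "isP 1" by (auto simp: isP_def One_fract_def)
lemma isP_Xf [simp]: "isP Xf" by (auto simp: isP_def Xf_def)
lemma isP_Fract [simp]: "isP (Fract c 1)" by (auto simp: isP_def)
lemma isP_add [intro]: "isP a \<Longrightarrow> isP b \<Longrightarrow> isP (a + b)" by (auto simp: isP_def)
lemma isP_mult [intro]: "isP a \<Longrightarrow> isP b \<Longrightarrow> isP (a * b)" by (auto simp: isP_def)
lemma isP_uminus [intro]: "isP a \<Longrightarrow> isP (- a)" by (auto simp: isP_def)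
lemma isP_diff [intro]: "isP a \<Longrightarrow> isP b \<Longrightarrow> isP (a - b)" by (auto simp: isP_def)
lemma isP_power [intro]: "isP a \<Longrightarrow> isP (a ^ k)" by (induction k) auto
lemma isP_of_nat [simp]: "isP (of_nat k)" by (auto simp: isP_def of_nat_fract)
lemma isP_sum [intro]: "(\<And>i. i \<in> A \<Longrightarrow> isP (f i)) \<Longrightarrow> isP (sum f A)"
  by (induction A rule: infinite_finite_induct) auto

lemma divn_0 [simp]: "divn n 0" by (auto simp: divn_def intro!: exI[of _ 0] simp: Zero_fract_def)
lemma divn_add [intro]: assumes "divn n a" "divn n b" shows "divn n (a + b)"
proof -
  obtain c d where "a = Xf ^ n * Fract c 1" "b = Xf ^ n * Fract d 1" using assms by (auto simp: divn_def)
  have e: "Fract (c + d) 1 = Fract c 1 + Fract d 1" by simp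
  have "a + b = Xf ^ n * Fract (c + d) 1" using \<open>a = _\<close> \<open>b = _\<close> by (simp only: e distrib_left)
  then show ?thesis unfolding divn_def by blast
qed
lemma divn_uminus [intro]: assumes "divn n a" shows "divn n (- a)"
proof -
  obtain c where "a = Xf ^ n * Fract c 1" using assms by (auto simp: divn_def)
  have e: "Fract (- c) 1 = - Fract c 1" by simp
  have "- a = Xf ^ n * Fract (- c) 1" using \<open>a = _\<close> by (simp only: e mult_minus_right)
  then show ?thesis unfolding divn_def by blast
qed
lemma divn_diff [intro]: "divn n a \<Longrightarrow> divn n b \<Longrightarrow> divn n (a - b)"
  using divn_add[of n a "-b"] divn_uminus[of n b] by simp
lemma divn_multP: "isP a \<Longrightarrow> divn n (Xf ^ n * a)"
  by (auto simp: divn_def isP_def)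
lemma divn_mult [intro]: assumes "divn n a" "isP b" shows "divn n (a * b)"
proof -
  obtain c d where "a = Xf ^ n * Fract c 1" "b = Fract d 1" using assms by (auto simp: divn_def isP_def)
  then have "a * b = Xf ^ n * Fract (c * d) 1" by (simp add: mult.assoc)
  then show ?thesis unfolding divn_def by blast
qed
lemma divn_sum [intro]: "(\<And>i. i \<in> A \<Longrightarrow> divn n (f i)) \<Longrightarrow> divn n (sum f A)"
  by (induction A rule: infinite_finite_induct) auto

lemma coeff_embR: "coeff (embR l P) j = (if j < l then Fract (coeff P j) 1 else 0)"
  by (simp add: embR_def coeff_mod_monom coeff_map_poly Zero_fract_def)

lemma degree_embR: "0 < l \<Longrightarrow> degree (embR l P) < l"
  by (simp add: embR_def degree_mod_monom)

lemma degree_lt_iff: assumes "0 < l" shows "degree p < l \<longleftrightarrow> (\<forall>j\<ge>l. coeff p j = 0)"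
proof
  assume "degree p < l" then show "\<forall>j\<ge>l. coeff p j = 0" by (auto intro!: coeff_eq_0)
next
  assume h: "\<forall>j\<ge>l. coeff p j = 0"
  show "degree p < l"
  proof (cases "p = 0")
    case True then show ?thesis using assms by simp
  next
    case False
    then have "coeff p (degree p) \<noteq> 0" by simp
    then show ?thesis using h by (meson not_le)
  qed
qed

lemma Rsub_eq: assumes l: "0 < l" shows "Rsub l = (Rset l :: 'a::field poly fract poly set)"
proof
  show "Rsub l \<subseteq> Rset l"
    using l by (auto simp: Rsub_def Rset_def degree_embR coeff_embR)
next
  show "Rset l \<subseteq> Rsub l"
  proof
    fix p assume p: "p \<in> Rset l"
    then have "\<forall>j. \<exists>c. coeff p j = Fract c 1" by (auto simp: Rset_def isP_def)
    then obtain c where c: "\<And>j. coeff p j = Fract (c j) 1" by metis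
    define P where "P = (\<Sum>j<l. monom (c j) j)"
    have "embR l P = p"
    proof (rule poly_eqI)
      fix j
      show "coeff (embR l P) j = coeff p j"
      proof (cases "j < l")
        case True
        have "coeff P j = c j" using True by (simp add: P_def coeff_sum)
        then show ?thesis using True by (simp add: coeff_embR c)
      next
        case False
        then show ?thesis using p l by (simp add: coeff_embR Rset_def degree_lt_iff)
      qed
    qed
    then show "p \<in> Rsub l" by (auto simp: Rsub_def)
  qed
qed


lemma finsum_Qring:
  assumes l: "0 < l" and A: "finite A" and f: "\<And>i. i \<in> A \<Longrightarrow> degree (f i) < l"
  shows "finsum (Qring l) f A = sum f A"
  using A f
proof (induction A rule: finite_induct)
  case empty
  interpret cring "Qring l" by (rule Qring_cring[OF l])
  show ?case by (simp add: Qring_simps)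
next
  case (insert a A)
  interpret cring "Qring l" by (rule Qring_cring[OF l])
  have "f \<in> A \<rightarrow> carrier (Qring l)" "f a \<in> carrier (Qring l)"
    using insert.prems by (auto simp: Qring_simps)
  then have "finsum (Qring l) f (insert a A) = f a \<oplus>\<^bsub>Qring l\<^esub> finsum (Qring l) f A"
    using insert.hyps by (simp add: finsum_insert)
  then show ?case using insert by (simp add: Qring_simps)
qed

lemma pow_Qring:
  assumes l: "0 < l" and p: "degree p < l"
  shows "p [^]\<^bsub>Qring l\<^esub> (k::nat) = p ^ k mod monom 1 l"
proof (induction k)
  case 0
  show ?case using l by (simp add: Qring_simps mod_monom_id)
next
  case (Suc k)
  then show ?case by (simp add: Qring_simps mod_mult_left_eq mod_mult_right_eq mult.commute)
qed

lemma map_poly_const: "map_poly (\<lambda>c. Fract c 1) [:a:] = [:Fract a 1:]"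
  by (rule poly_eqI) (simp add: coeff_map_poly Zero_fract_def coeff_pCons split: nat.split)

lemma map_poly_lin: "map_poly (\<lambda>c. Fract c 1) [:a, b:] = [:Fract a 1, Fract b 1:]"
  by (rule poly_eqI) (simp add: coeff_map_poly Zero_fract_def coeff_pCons split: nat.split)

lemma xQ_eq: "0 < l \<Longrightarrow> xQ l = [:Xf:]"
  by (simp add: xQ_def embR_def Xf_def mod_monom_id map_poly_const)

lemma monom_1_1: "monom 1 (Suc 0) = [:0, 1:]"
  by (simp add: monom_Suc monom_0)

lemma yQ_eq: "1 < l \<Longrightarrow> yQ l = monom 1 1"
proof -
  assume l: "1 < l"
  have "map_poly (\<lambda>c. Fract c 1) [:0::'a::field poly, 1:] = [:0, 1:]"
    by (simp add: map_poly_lin Zero_fract_def One_fract_def)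
  then show ?thesis using l by (simp add: yQ_def embR_def mod_monom_id monom_1_1)
qed

lemma embR_const: "0 < l \<Longrightarrow> embR l [:c:] = [:Fract c 1:]"
  by (simp add: embR_def mod_monom_id map_poly_const)

lemma Dsub_eq: "0 < l \<Longrightarrow> Dsub l = {[:Fract c 1:] | c. True}"
  unfolding Dsub_def by (force simp: embR_const)


lemma xpow_eq: "0 < l \<Longrightarrow> xQ l [^]\<^bsub>Qring l\<^esub> (k::nat) = [:Xf ^ k:]"
  by (simp add: xQ_eq pow_Qring poly_const_pow mod_monom_id)

lemma xinv_eq:
  assumes l: "0 < l" shows "inv\<^bsub>Qring l\<^esub> (xQ l [^]\<^bsub>Qring l\<^esub> (k::nat)) = [:inverse Xf ^ k:]"
proof -
  interpret cring "Qring l" by (rule Qring_cring[OF l])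
  note i = right_inverse[OF Xf_nz] left_inverse[OF Xf_nz]
  have "[:Xf ^ k:] * [:inverse Xf ^ k:] = 1"
    by (simp add: power_mult_distrib[symmetric] one_pCons i)
  then show ?thesis using l
    by (simp add: xpow_eq, intro comm_inv_char) (simp_all add: Qring_simps mod_monom_id)
qed

lemma degree_monom1_lt: "1 < l \<Longrightarrow> degree (monom c 1) < l"
  using degree_monom_le[of c 1] by linarith
lemma degree_monom1_lt': "Suc 0 < l \<Longrightarrow> degree (monom c (Suc 0)) < l"
  using degree_monom_le[of c 1] by simp

lemma zQ_eq: assumes l: "1 < l" shows "zQ l n = monom (inverse Xf ^ n) 1"
  using l by (simp add: zQ_def yQ_eq xinv_eq Qring_simps mod_monom_id smult_monom degree_monom1_lt')

lemma zpow_eq: assumes l: "1 < l"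
  shows "zQ l n [^]\<^bsub>Qring l\<^esub> (i::nat) = (if i < l then monom (inverse Xf ^ (n * i)) i else 0)"
proof -
  have d: "degree (zQ l n) < l" using l unfolding zQ_eq[OF l] by (rule degree_monom1_lt)
  have "zQ l n [^]\<^bsub>Qring l\<^esub> i = zQ l n ^ i mod monom 1 l" by (rule pow_Qring) (use l d in auto)
  also have "\<dots> = (if i < l then monom (inverse Xf ^ (n * i)) i else 0)"
    unfolding zQ_eq[OF l]
    by (simp add: monom_power power_mult[symmetric] poly_eq_iff coeff_mod_monom coeff_monom)
  finally show ?thesis .
qed


lemma degree_monom_lt: "i < l \<Longrightarrow> degree (monom c i) < l"
  using degree_monom_le[of c i] by linarith

lemma Xf_inv1 [simp]: "Xf * inverse Xf = 1" by (rule right_inverse[OF Xf_nz])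
lemma Xf_inv2 [simp]: "inverse Xf * Xf = 1" by (rule left_inverse[OF Xf_nz])

lemma Xf_pow_inv: "Xf ^ k * inverse Xf ^ k = 1" "inverse Xf ^ k * Xf ^ k = 1"
  by (simp_all add: power_mult_distrib[symmetric])

lemma Xf_cancel: "Xf ^ k * (a * inverse Xf ^ k) = a"
proof -
  have "Xf ^ k * (a * inverse Xf ^ k) = a * (Xf ^ k * inverse Xf ^ k)" by (simp only: mult_ac)
  then show ?thesis by (simp only: Xf_pow_inv mult_1_right)
qed

lemma Xf_cancel': assumes "Xf ^ k * b = a" shows "b = a * inverse Xf ^ k"
proof -
  have "a * inverse Xf ^ k = b * (Xf ^ k * inverse Xf ^ k)" unfolding assms[symmetric] by (simp only: mult_ac)
  then show ?thesis by (simp only: Xf_pow_inv mult_1_right)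
qed

lemma term_z: assumes l: "1 < l"
  shows "[:a:] \<otimes>\<^bsub>Qring l\<^esub> (zQ l n [^]\<^bsub>Qring l\<^esub> (i::nat)) =
         (if i < l then monom (a * inverse Xf ^ (n * i)) i else 0)"
  using l by (simp add: zpow_eq Qring_simps smult_monom mod_monom_id degree_monom_lt)

lemma coeff_sum_ifmonom:
  assumes "finite A"
  shows "coeff (\<Sum>i\<in>A. if i < l then monom (b i) i else 0) j = (if j \<in> A \<and> j < l then b j else 0)"
proof -
  have "coeff (\<Sum>i\<in>A. if i < l then monom (b i) i else 0) j =
        (\<Sum>i\<in>A. if i = j then (if j < l then b j else 0) else 0)"
    unfolding coeff_sum by (rule sum.cong) (auto simp: coeff_monom)
  then show ?thesis using assms by simp
qed

lemma Salg_eq: assumes l: "1 < l" shows "Salg l n = Sset l n"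
proof
  show "Salg l n \<subseteq> Sset l n"
  proof
    fix x assume "x \<in> Salg l n"
    then obtain m d where x: "x = finsum (Qring l) (\<lambda>i. d i \<otimes>\<^bsub>Qring l\<^esub> (zQ l n [^]\<^bsub>Qring l\<^esub> (i::nat))) {..(m::nat)}"
      and d: "\<forall>i. d i \<in> Dsub l" unfolding Salg_def by blast
    have "\<forall>i. \<exists>c. d i = [:Fract c 1:]" using d l by (simp add: Dsub_eq)
    then obtain c where c: "\<And>i. d i = [:Fract (c i) 1:]" by metis
    have "x = (\<Sum>i\<in>{..m}. if i < l then monom (Fract (c i) 1 * inverse Xf ^ (n * i)) i else 0)"
      unfolding x c using l by (simp add: term_z finsum_Qring degree_monom_lt)
    then have cx: "coeff x j = (if j \<le> m \<and> j < l then Fract (c j) 1 * inverse Xf ^ (n * j) else 0)" for j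
      by (simp add: coeff_sum_ifmonom)
    have "degree x < l" using l by (subst degree_lt_iff) (auto simp: cx)
    moreover have "isP (Xf ^ (n * j) * coeff x j)" for j
      by (simp add: cx Xf_cancel)
    ultimately show "x \<in> Sset l n" by (simp add: Sset_def)
  qed
next
  show "Sset l n \<subseteq> Salg l n"
  proof
    fix x assume x: "x \<in> Sset l n"
    then have "\<forall>j. \<exists>c. Xf ^ (n * j) * coeff x j = Fract c 1" by (auto simp: Sset_def isP_def)
    then obtain c where c: "\<And>j. Xf ^ (n * j) * coeff x j = Fract (c j) 1" by metis
    define d where "d i = [:Fract (c i) 1:]" for i
    have d: "\<forall>i. d i \<in> Dsub l" using l by (auto simp: Dsub_eq d_def)
    have "finsum (Qring l) (\<lambda>i. d i \<otimes>\<^bsub>Qring l\<^esub> (zQ l n [^]\<^bsub>Qring l\<^esub> (i::nat))) {..l}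
        = (\<Sum>i\<in>{..l}. if i < l then monom (Fract (c i) 1 * inverse Xf ^ (n * i)) i else 0)"
      unfolding d_def using l by (simp add: term_z finsum_Qring degree_monom_lt)
    also have "\<dots> = x"
    proof (rule poly_eqI)
      fix j
      show "coeff (\<Sum>i\<in>{..l}. if i < l then monom (Fract (c i) 1 * inverse Xf ^ (n * i)) i else 0) j = coeff x j"
      proof (cases "j < l")
        case True
        then show ?thesis using Xf_cancel'[OF c[of j]] by (simp add: coeff_sum_ifmonom)
      next
        case False
        then show ?thesis using x l by (simp add: coeff_sum_ifmonom Sset_def degree_lt_iff)
      qed
    qed
    finally show "x \<in> Salg l n" unfolding Salg_def using d by blast
  qed
qed


definition RHS :: "nat \<Rightarrow> nat \<Rightarrow> 'a::field poly fract poly set" where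
  "RHS l n = {r \<oplus>\<^bsub>Qring l\<^esub> finsum (Qring l)
           (\<lambda>i. d i \<otimes>\<^bsub>Qring l\<^esub> ((yQ l [^]\<^bsub>Qring l\<^esub> (i::nat)) \<otimes>\<^bsub>Qring l\<^esub>
                 inv\<^bsub>Qring l\<^esub> (xQ l [^]\<^bsub>Qring l\<^esub> ((i - 1) * n)))) {2..l - 1}
        | r d. r \<in> Rsub l \<and> (\<forall>i. d i \<in> Dsub l)}"

lemma ypow_eq: assumes l: "1 < l" and i: "i < l"
  shows "yQ l [^]\<^bsub>Qring l\<^esub> (i::nat) = monom 1 i"
proof -
  have d: "degree (yQ l) < l" using l unfolding yQ_eq[OF l] by (rule degree_monom1_lt)
  have "yQ l [^]\<^bsub>Qring l\<^esub> i = yQ l ^ i mod monom 1 l" by (rule pow_Qring) (use l d in auto)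
  also have "\<dots> = monom 1 i" unfolding yQ_eq[OF l]
    using i by (simp add: monom_power mod_monom_id degree_monom_lt)
  finally show ?thesis .
qed

lemma term_y: assumes l: "1 < l" and i: "i < l"
  shows "[:a:] \<otimes>\<^bsub>Qring l\<^esub> ((yQ l [^]\<^bsub>Qring l\<^esub> (i::nat)) \<otimes>\<^bsub>Qring l\<^esub>
                 inv\<^bsub>Qring l\<^esub> (xQ l [^]\<^bsub>Qring l\<^esub> (k::nat))) = monom (a * inverse Xf ^ k) i"
  using l i by (simp add: ypow_eq xinv_eq Qring_simps mod_monom_id degree_monom_lt
      monom_0[symmetric] mult_monom mult.commute)

lemma sum_term_y: assumes l: "1 < l"
  shows "finsum (Qring l) (\<lambda>i. [:a i:] \<otimes>\<^bsub>Qring l\<^esub> ((yQ l [^]\<^bsub>Qring l\<^esub> (i::nat)) \<otimes>\<^bsub>Qring l\<^esub>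
                 inv\<^bsub>Qring l\<^esub> (xQ l [^]\<^bsub>Qring l\<^esub> ((i - 1) * n)))) {2..l - 1}
     = (\<Sum>i\<in>{2..l-1}. monom (a i * inverse Xf ^ ((i - 1) * n)) i)"
proof -
  have "finsum (Qring l) (\<lambda>i. [:a i:] \<otimes>\<^bsub>Qring l\<^esub> ((yQ l [^]\<^bsub>Qring l\<^esub> (i::nat)) \<otimes>\<^bsub>Qring l\<^esub>
                 inv\<^bsub>Qring l\<^esub> (xQ l [^]\<^bsub>Qring l\<^esub> ((i - 1) * n)))) {2..l - 1}
     = (\<Sum>i\<in>{2..l-1}. [:a i:] \<otimes>\<^bsub>Qring l\<^esub> ((yQ l [^]\<^bsub>Qring l\<^esub> (i::nat)) \<otimes>\<^bsub>Qring l\<^esub>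
                 inv\<^bsub>Qring l\<^esub> (xQ l [^]\<^bsub>Qring l\<^esub> ((i - 1) * n))))"
    by (rule finsum_Qring) (use l in \<open>auto simp: term_y degree_monom_lt\<close>)
  also have "\<dots> = (\<Sum>i\<in>{2..l-1}. monom (a i * inverse Xf ^ ((i - 1) * n)) i)"
    by (rule sum.cong) (use l in \<open>auto simp: term_y\<close>)
  finally show ?thesis .
qed

lemma coeff_sum_monom':
  assumes "finite A"
  shows "coeff (\<Sum>i\<in>A. monom (b i) i) j = (if j \<in> A then b j else 0)"
proof -
  have "coeff (\<Sum>i\<in>A. monom (b i) i) j = (\<Sum>i\<in>A. if i = j then b j else 0)"
    unfolding coeff_sum by (rule sum.cong) (auto simp: coeff_monom)
  then show ?thesis using assms by simp
qed

lemma Xf_split: "1 \<le> j \<Longrightarrow> Xf ^ (n * j) = Xf ^ n * Xf ^ ((j - 1) * n)"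
  by (metis Suc_diff_le diff_Suc_1 mult.commute mult_Suc_right power_add)

lemma Xf_pow_nz [simp]: "Xf ^ k \<noteq> 0"
  by (simp add: Xf_nz)

lemma RHS_eq: assumes l: "2 < l" shows "RHS l n = Tset l n"
proof
  have l1: "1 < l" "0 < l" using l by auto
  show "RHS l n \<subseteq> Tset l n"
  proof
    fix x assume "x \<in> RHS l n"
    then obtain r d where x: "x = r \<oplus>\<^bsub>Qring l\<^esub> finsum (Qring l)
           (\<lambda>i. d i \<otimes>\<^bsub>Qring l\<^esub> ((yQ l [^]\<^bsub>Qring l\<^esub> (i::nat)) \<otimes>\<^bsub>Qring l\<^esub>
                 inv\<^bsub>Qring l\<^esub> (xQ l [^]\<^bsub>Qring l\<^esub> ((i - 1) * n)))) {2..l - 1}"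
      and r: "r \<in> Rsub l" and d: "\<forall>i. d i \<in> Dsub l" unfolding RHS_def by blast
    have "\<forall>i. \<exists>c. d i = [:Fract c 1:]" using d l1 by (simp add: Dsub_eq)
    then obtain c where c: "\<And>i. d i = [:Fract (c i) 1:]" by metis
    have r': "r \<in> Rset l" using r l1 by (simp add: Rsub_eq)
    have "x = r + (\<Sum>i\<in>{2..l-1}. monom (Fract (c i) 1 * inverse Xf ^ ((i - 1) * n)) i)"
      unfolding x c Qring_simps(3) sum_term_y[OF l1(1)] by (rule refl)
    then have cx: "coeff x j = coeff r j + (if j \<in> {2..l-1} then Fract (c j) 1 * inverse Xf ^ ((j - 1) * n) else 0)" for j
      by (simp add: coeff_sum_monom')
    have "degree x < l" using l1 r' by (subst degree_lt_iff) (auto simp: cx Rset_def degree_lt_iff)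
    moreover have "isP (Xf ^ (n * j) * coeff x j)" for j
    proof (cases "j \<in> {2..l-1}")
      case True
      then have "Xf ^ (n * j) * coeff x j = Xf ^ (n * j) * coeff r j + Xf ^ n * Fract (c j) 1"
        by (simp add: cx distrib_left Xf_split Xf_cancel mult.assoc)
      then show ?thesis using r' by (simp add: Rset_def) (intro isP_add isP_mult isP_power; simp)
    next
      case False
      then show ?thesis using r' by (auto simp: Rset_def cx intro!: isP_mult isP_power)
    qed
    moreover have "divn n (Xf ^ (n * j) * coeff x j)" if j: "1 \<le> j" for j
    proof -
      have a: "divn n (Xf ^ (n * j) * coeff r j)"
        using r' j by (simp add: Xf_split mult.assoc Rset_def) (intro divn_multP isP_mult isP_power; simp)
      show ?thesis
      proof (cases "j \<in> {2..l-1}")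
        case True
        then have "Xf ^ (n * j) * coeff x j = Xf ^ (n * j) * coeff r j + Xf ^ n * Fract (c j) 1"
          by (simp add: cx distrib_left Xf_split Xf_cancel mult.assoc)
        then show ?thesis using a by (auto intro!: divn_multP)
      next
        case False
        then have "coeff x j = coeff r j" unfolding cx by auto
        then show ?thesis using a by simp
      qed
    qed
    ultimately show "x \<in> Tset l n" by (simp add: Tset_def Sset_def)
  qed
next
  have l1: "1 < l" "0 < l" using l by auto
  show "Tset l n \<subseteq> RHS l n"
  proof
    fix x assume x: "x \<in> Tset l n"
    then have "\<forall>j. \<exists>c. 1 \<le> j \<longrightarrow> Xf ^ (n * j) * coeff x j = Xf ^ n * Fract c 1"
      by (auto simp: Tset_def divn_def)
    then obtain e where e: "\<And>j. 1 \<le> j \<Longrightarrow> Xf ^ (n * j) * coeff x j = Xf ^ n * Fract (e j) 1" by metis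
    have e': "Xf ^ ((j - 1) * n) * coeff x j = Fract (e j) 1" if "1 \<le> j" for j
    proof -
      have "Xf ^ n * (Xf ^ ((j - 1) * n) * coeff x j) = Xf ^ (n * j) * coeff x j"
        by (simp add: Xf_split[OF that] mult.assoc)
      also have "\<dots> = Xf ^ n * Fract (e j) 1" by (rule e[OF that])
      finally show ?thesis by (simp add: Xf_nz)
    qed
    have x0: "isP (coeff x 0)" using x by (auto simp: Tset_def Sset_def dest: spec[of _ 0])
    define r where "r = [:coeff x 0, Fract (e 1) 1:]"
    define d where "d i = [:Fract (e i) 1:]" for i
    have rR: "r \<in> Rsub l" 
      using x0 l1 by (auto simp: Rsub_eq Rset_def r_def coeff_pCons split: nat.split)
    have dD: "\<forall>i. d i \<in> Dsub l" using l1 by (auto simp: Dsub_eq d_def)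
    have "r \<oplus>\<^bsub>Qring l\<^esub> finsum (Qring l)
           (\<lambda>i. d i \<otimes>\<^bsub>Qring l\<^esub> ((yQ l [^]\<^bsub>Qring l\<^esub> (i::nat)) \<otimes>\<^bsub>Qring l\<^esub>
                 inv\<^bsub>Qring l\<^esub> (xQ l [^]\<^bsub>Qring l\<^esub> ((i - 1) * n)))) {2..l - 1}
        = r + (\<Sum>i\<in>{2..l-1}. monom (Fract (e i) 1 * inverse Xf ^ ((i - 1) * n)) i)"
      unfolding d_def Qring_simps(3) sum_term_y[OF l1(1)] by (rule refl)
    also have "\<dots> = x"
    proof (rule poly_eqI)
      fix j
      consider "j = 0" | "j = 1" | "j \<in> {2..l-1}" | "l \<le> j" by force
      then show "coeff (r + (\<Sum>i\<in>{2..l-1}. monom (Fract (e i) 1 * inverse Xf ^ ((i - 1) * n)) i)) j = coeff x j"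
      proof cases
        case 1 then show ?thesis by (simp add: coeff_sum_monom' r_def)
      next
        case 2 then show ?thesis using e'[of 1] by (simp add: coeff_sum_monom' r_def)
      next
        case 3
        then have "coeff x j = Fract (e j) 1 * inverse Xf ^ ((j - 1) * n)"
          using e'[of j] by (intro Xf_cancel') auto
        then show ?thesis using 3 by (simp add: coeff_sum_monom' r_def coeff_pCons split: nat.split)
      next
        case 4
        then have "coeff x j = 0" using x l by (simp add: Tset_def Sset_def degree_lt_iff)
        moreover have "j \<notin> {2..l-1}" "j \<noteq> 0" "j \<noteq> 1" using 4 l by auto
        ultimately show ?thesis
          by (simp add: coeff_sum_monom' r_def coeff_pCons split: nat.split)
      qed
    qed
    finally show "x \<in> RHS l n" unfolding RHS_def using rR dD by blast
  qed
qed


lemma poly_mod_sum: "(\<Sum>i\<in>A. f i) mod (m::'a::field poly) = (\<Sum>i\<in>A. f i mod m)"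
  by (induction A rule: infinite_finite_induct) (simp_all add: poly_mod_add_left)

lemma Rset_const: "0 < l \<Longrightarrow> isP a \<Longrightarrow> [:a:] \<in> Rset l"
  by (auto simp: Rset_def coeff_pCons split: nat.split)

lemma Sset_integral: assumes l: "0 < l" and x: "x \<in> Sset l n"
  shows "x \<in> integral_closure (Qring l) (Rsub l)"
proof -
  define d0 where "d0 = coeff x 0"
  have d0: "isP d0" using x by (auto simp: Sset_def d0_def dest: spec[of _ 0])
  have dx: "degree x < l" using x by (simp add: Sset_def)
  define c where "c i = [:of_nat (l choose i) * (- d0) ^ (l - i):]" for i
  have cR: "\<forall>i<l. c i \<in> Rsub l"
    using l d0 by (auto simp: Rsub_eq c_def intro!: Rset_const isP_mult isP_power isP_uminus)
  have pw: "x [^]\<^bsub>Qring l\<^esub> (k::nat) = x ^ k mod monom 1 l" for k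
    by (rule pow_Qring) (use l dx in auto)
  have "finsum (Qring l) (\<lambda>i. c i \<otimes>\<^bsub>Qring l\<^esub> (x [^]\<^bsub>Qring l\<^esub> i)) {..<l}
      = (\<Sum>i<l. c i \<otimes>\<^bsub>Qring l\<^esub> (x [^]\<^bsub>Qring l\<^esub> i))"
    by (rule finsum_Qring) (use l in \<open>auto simp: Qring_simps degree_mod_monom\<close>)
  also have "\<dots> = (\<Sum>i<l. (c i * x ^ i) mod monom 1 l)"
    by (simp add: pw Qring_simps mod_mult_right_eq)
  finally have fs: "finsum (Qring l) (\<lambda>i. c i \<otimes>\<^bsub>Qring l\<^esub> (x [^]\<^bsub>Qring l\<^esub> i)) {..<l}
      = (\<Sum>i<l. c i * x ^ i) mod monom 1 l" by (simp add: poly_mod_sum)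
  have cl: "c l = 1" by (simp add: c_def one_pCons)
  have "x ^ l + (\<Sum>i<l. c i * x ^ i) = (\<Sum>i\<le>l. c i * x ^ i)"
    by (simp add: lessThan_Suc_atMost[symmetric] cl)
  also have "\<dots> = (\<Sum>k\<le>l. of_nat (l choose k) * x ^ k * [:- d0:] ^ (l - k))"
    by (rule sum.cong) (simp_all add: c_def of_nat_poly poly_const_pow mult_ac)
  also have "\<dots> = (x + [:- d0:]) ^ l" by (rule binomial_ring[symmetric])
  finally have bin: "x ^ l + (\<Sum>i<l. c i * x ^ i) = (x + [:- d0:]) ^ l" .
  obtain a q where w: "x + [:- d0:] = pCons a q" by (cases "x + [:- d0:]") auto
  have "a = 0" using arg_cong[OF w, of "\<lambda>p. coeff p 0"] by (simp add: d0_def)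
  then have w': "x + [:- d0:] = monom 1 1 * q" using w by (simp add: monom_1_1)
  have "(x + [:- d0:]) ^ l mod monom 1 l = 0"
    unfolding w' power_mult_distrib monom_power by simp
  then have "x [^]\<^bsub>Qring l\<^esub> l \<oplus>\<^bsub>Qring l\<^esub> finsum (Qring l) (\<lambda>i. c i \<otimes>\<^bsub>Qring l\<^esub> (x [^]\<^bsub>Qring l\<^esub> i)) {..<l} = \<zero>\<^bsub>Qring l\<^esub>"
    apply (subst fs)
    unfolding pw Qring_simps(3,5) by (simp add: poly_mod_add_left[symmetric] bin)
  then show ?thesis unfolding integral_closure_def using cR dx by (auto simp: Qring_simps)
qed


lemma Rset_sub_Sset: "Rset l \<subseteq> Sset l n"
  by (auto simp: Rset_def Sset_def intro!: isP_mult isP_power)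

lemma Sset_add: "p \<in> Sset l n \<Longrightarrow> q \<in> Sset l n \<Longrightarrow> p + q \<in> Sset l n"
  unfolding Sset_def using degree_add_le_max[of p q]
  by (auto simp: distrib_left intro!: isP_add)

lemma Sset_0: "0 < l \<Longrightarrow> 0 \<in> Sset l n"
  by (simp add: Sset_def)

lemma Sset_1: "0 < l \<Longrightarrow> 1 \<in> Sset l n"
  by (auto simp: Sset_def coeff_1)

lemma Xf_pow_split: "i \<le> j \<Longrightarrow> Xf ^ (n * j) = Xf ^ (n * i) * Xf ^ (n * (j - i))"
  by (metis add_diff_inverse_nat not_le power_add distrib_left)

lemma Sset_mult: assumes l: "0 < l" and p: "p \<in> Sset l n" and q: "q \<in> Sset l n"
  shows "(p * q) mod monom 1 l \<in> Sset l n"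
proof -
  have "isP (Xf ^ (n * j) * coeff ((p * q) mod monom 1 l) j)" for j
  proof (cases "j < l")
    case True
    have "Xf ^ (n * j) * coeff ((p * q) mod monom 1 l) j =
          (\<Sum>i\<le>j. Xf ^ (n * j) * (coeff p i * coeff q (j - i)))"
      using True by (simp add: coeff_mod_monom coeff_mult sum_distrib_left)
    also have "\<dots> = (\<Sum>i\<le>j. (Xf ^ (n * i) * coeff p i) * (Xf ^ (n * (j - i)) * coeff q (j - i)))"
    proof (rule sum.cong)
      fix i assume "i \<in> {..j}"
      then show "Xf ^ (n * j) * (coeff p i * coeff q (j - i)) = (Xf ^ (n * i) * coeff p i) * (Xf ^ (n * (j - i)) * coeff q (j - i))"
        by (subst Xf_pow_split[of i j n]) (simp_all add: mult_ac)
    qed simp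
    moreover have "isP ((Xf ^ (n * i) * coeff p i) * (Xf ^ (n * (j - i)) * coeff q (j - i)))" for i
    proof -
      have "isP (Xf ^ (n * i) * coeff p i)" "isP (Xf ^ (n * (j - i)) * coeff q (j - i))"
        using p q by (simp_all add: Sset_def)
      then show ?thesis by (rule isP_mult)
    qed
    ultimately show ?thesis by (simp only:) (rule isP_sum)
  next
    case False then show ?thesis by (simp add: coeff_mod_monom)
  qed
  then show ?thesis using l by (simp add: Sset_def degree_mod_monom)
qed

definition Bf :: "nat \<Rightarrow> nat \<Rightarrow> 'a::field poly fract poly \<times> 'a poly fract poly \<Rightarrow> 'a poly fract" where
  "Bf n j q = Xf ^ (n * j) * coeff (fst q) j * coeff (snd q) 0"

definition Phi :: "nat \<Rightarrow> nat \<Rightarrow> ('a::field poly fract poly \<times> 'a poly fract poly) set \<Rightarrow>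
    ('a poly fract poly \<times> 'a poly fract poly \<Rightarrow> int) \<Rightarrow> 'a poly fract" where
  "Phi n j A g = (\<Sum>q\<in>A. of_int (g q) * Bf n j q)"

lemma Phi_supp: "finite A \<Longrightarrow> {q. g q \<noteq> 0} \<subseteq> A \<Longrightarrow> Phi n j A g = Phi n j {q. g q \<noteq> 0} g"
  unfolding Phi_def by (rule sum.mono_neutral_right) auto

lemma Phi_fadd: "Phi n j A (fadd f g) = Phi n j A f + Phi n j A g"
  by (simp add: Phi_def fadd_def distrib_right sum.distrib)

lemma Phi_fsub: "Phi n j A (fsub f g) = Phi n j A f - Phi n j A g"
  by (simp add: Phi_def fsub_def left_diff_distrib sum_subtractf)

lemma Phi_neg: "Phi n j A (\<lambda>q. - f q) = - Phi n j A f"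
  by (simp add: Phi_def sum_negf)

lemma Phi_tdelta: assumes "finite A" "p \<in> A" shows "Phi n j A (tdelta p) = Bf n j p"
proof -
  have "Phi n j A (tdelta p) = (\<Sum>q\<in>A. if q = p then Bf n j q else 0)"
    unfolding Phi_def tdelta_def by (rule sum.cong) auto
  then show ?thesis using assms by simp
qed

lemma scal_divn:
  assumes l: "j < l" and r: "r \<in> Rset l" and s: "s \<in> Sset l n" and t: "t \<in> Sset l n"
  shows "divn n (Bf n j ((r * s) mod monom 1 l, t) - Bf n j (s, (r * t) mod monom 1 l))"
proof -
  have l0: "0 < l" using l by simp
  define f where "f i = Xf ^ (n * j) * (coeff r i * coeff s (j - i)) * coeff t 0" for i
  have "Bf n j ((r * s) mod monom 1 l, t) = (\<Sum>i\<le>j. f i)"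
    using l by (simp add: Bf_def coeff_mod_monom coeff_mult f_def sum_distrib_left sum_distrib_right)
  moreover have "Bf n j (s, (r * t) mod monom 1 l) = f 0"
    using l0 by (simp add: Bf_def coeff_mod_monom coeff_mult f_def mult_ac)
  moreover have "(\<Sum>i\<le>j. f i) - f 0 = (\<Sum>i\<in>{..j} - {0}. f i)"
    by (simp add: sum_diff1)
  moreover have "divn n (f i)" if i: "i \<in> {..j} - {0}" for i
  proof -
    have i1: "1 \<le> i" "i \<le> j" using i by auto
    have e: "(Xf :: 'a poly fract) ^ (n * j) = Xf ^ n * Xf ^ ((i - 1) * n) * Xf ^ (n * (j - i))"
      by (subst Xf_pow_split[OF i1(2)], subst Xf_split[OF i1(1)]) (rule refl)
    have "f i = Xf ^ n * ((Xf ^ ((i - 1) * n) * coeff r i) * (Xf ^ (n * (j - i)) * coeff s (j - i)) * coeff t 0)"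
      unfolding f_def e by (simp add: mult_ac)
    moreover have "isP (coeff t 0)" using t by (auto simp: Sset_def dest: spec[of _ 0])
    moreover have "isP (Xf ^ ((i - 1) * n) * coeff r i)"
      using r by (simp add: Rset_def) (rule isP_mult; simp add: isP_power)
    moreover have "isP (Xf ^ (n * (j - i)) * coeff s (j - i))" using s by (simp add: Sset_def)
    ultimately show ?thesis by (simp only:) (rule divn_multP, rule isP_mult[OF isP_mult])
  qed
  ultimately show ?thesis by (metis divn_sum)
qed


lemma tensor_inv:
  assumes l: "j < l" and g: "g \<in> tensor_rels (Qring l) (Rset l) (Sset l n)"
  shows "finite {q. g q \<noteq> 0} \<and> {q. g q \<noteq> 0} \<subseteq> Sset l n \<times> Sset l n \<and> divn n (Phi n j {q. g q \<noteq> 0} g)"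
  using g
proof induction
  case zero
  then show ?case by (simp add: Phi_def)
next
  case (add f g)
  let ?U = "{q. f q \<noteq> 0} \<union> {q. g q \<noteq> 0}"
  have sub: "{q. fadd f g q \<noteq> 0} \<subseteq> ?U" by (auto simp: fadd_def)
  have fin: "finite ?U" using add.IH by simp
  have "Phi n j {q. fadd f g q \<noteq> 0} (fadd f g) = Phi n j ?U (fadd f g)"
    using Phi_supp[OF fin sub] by simp
  also have "\<dots> = Phi n j ?U f + Phi n j ?U g" by (rule Phi_fadd)
  also have "\<dots> = Phi n j {q. f q \<noteq> 0} f + Phi n j {q. g q \<noteq> 0} g"
    using Phi_supp[OF fin, of f] Phi_supp[OF fin, of g] by auto
  finally have e: "Phi n j {q. fadd f g q \<noteq> 0} (fadd f g) = Phi n j {q. f q \<noteq> 0} f + Phi n j {q. g q \<noteq> 0} g" .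
  show ?case
  proof (intro conjI)
    show "finite {q. fadd f g q \<noteq> 0}" using fin sub by (rule finite_subset[rotated])
    show "{q. fadd f g q \<noteq> 0} \<subseteq> Sset l n \<times> Sset l n" using sub add.IH by blast
    show "divn n (Phi n j {q. fadd f g q \<noteq> 0} (fadd f g))" unfolding e using add.IH by (intro divn_add) auto
  qed
next
  case (neg f)
  have e: "{q. - f q \<noteq> 0} = {q. f q \<noteq> 0}" by simp
  show ?case unfolding e Phi_neg using neg.IH by auto
next
  case (addL s s' t)
  let ?g = "fsub (fsub (tdelta (s \<oplus>\<^bsub>Qring l\<^esub> s', t)) (tdelta (s, t))) (tdelta (s', t))"
  let ?U = "{(s \<oplus>\<^bsub>Qring l\<^esub> s', t), (s, t), (s', t)}"
  have sub: "{q. ?g q \<noteq> 0} \<subseteq> ?U" by (auto simp: fsub_def tdelta_def split: if_splits)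
  have fin: "finite ?U" by simp
  have "Phi n j {q. ?g q \<noteq> 0} ?g = Phi n j ?U ?g" using Phi_supp[OF fin sub] by simp
  also have "\<dots> = 0" by (simp add: Phi_fsub Phi_tdelta Bf_def Qring_simps distrib_left distrib_right)
  finally have e: "Phi n j {q. ?g q \<noteq> 0} ?g = 0" .
  have US: "?U \<subseteq> Sset l n \<times> Sset l n" using addL by (auto simp: Qring_simps Sset_add)
  show ?case unfolding e using sub US fin by (auto intro: finite_subset)
next
  case (addR s t t')
  let ?g = "fsub (fsub (tdelta (s, t \<oplus>\<^bsub>Qring l\<^esub> t')) (tdelta (s, t))) (tdelta (s, t'))"
  let ?U = "{(s, t \<oplus>\<^bsub>Qring l\<^esub> t'), (s, t), (s, t')}"
  have sub: "{q. ?g q \<noteq> 0} \<subseteq> ?U" by (auto simp: fsub_def tdelta_def split: if_splits)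
  have fin: "finite ?U" by simp
  have "Phi n j {q. ?g q \<noteq> 0} ?g = Phi n j ?U ?g" using Phi_supp[OF fin sub] by simp
  also have "\<dots> = 0" by (simp add: Phi_fsub Phi_tdelta Bf_def Qring_simps distrib_left distrib_right)
  finally have e: "Phi n j {q. ?g q \<noteq> 0} ?g = 0" .
  have US: "?U \<subseteq> Sset l n \<times> Sset l n" using addR by (auto simp: Qring_simps Sset_add)
  show ?case unfolding e using sub US fin by (auto intro: finite_subset)
next
  case (scal r s t)
  let ?g = "fsub (tdelta (r \<otimes>\<^bsub>Qring l\<^esub> s, t)) (tdelta (s, r \<otimes>\<^bsub>Qring l\<^esub> t))"
  let ?U = "{(r \<otimes>\<^bsub>Qring l\<^esub> s, t), (s, r \<otimes>\<^bsub>Qring l\<^esub> t)}"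
  have sub: "{q. ?g q \<noteq> 0} \<subseteq> ?U" by (auto simp: fsub_def tdelta_def split: if_splits)
  have fin: "finite ?U" by simp
  have "Phi n j {q. ?g q \<noteq> 0} ?g = Phi n j ?U ?g" using Phi_supp[OF fin sub] by simp
  also have "\<dots> = Bf n j ((r * s) mod monom 1 l, t) - Bf n j (s, (r * t) mod monom 1 l)"
    by (simp add: Phi_fsub Phi_tdelta Qring_simps)
  finally have e: "Phi n j {q. ?g q \<noteq> 0} ?g = Bf n j ((r * s) mod monom 1 l, t) - Bf n j (s, (r * t) mod monom 1 l)" .
  have l0: "0 < l" using l by simp
  have rS: "r \<in> Sset l n" using scal Rset_sub_Sset by blast
  have US: "?U \<subseteq> Sset l n \<times> Sset l n" using scal rS l0 by (auto simp: Qring_simps Sset_mult)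
  show ?case unfolding e using sub US fin scal_divn[OF l scal(1-3)] by (auto intro: finite_subset)
qed


lemma strict_sub: assumes l: "0 < l"
  shows "strict_closure (Qring l) (Rset l) (Sset l n) \<subseteq> Tset l n"
proof
  fix a assume a: "a \<in> strict_closure (Qring l) (Rset l) (Sset l n)"
  then have aS: "a \<in> Sset l n"
    and f: "fsub (tdelta (a, 1)) (tdelta (1, a)) \<in> tensor_rels (Qring l) (Rset l) (Sset l n)"
    by (auto simp: strict_closure_def Qring_simps)
  have "divn n (Xf ^ (n * j) * coeff a j)" if j: "1 \<le> j" for j
  proof (cases "j < l")
    case False
    then have "coeff a j = 0" using aS l by (simp add: Sset_def degree_lt_iff)
    then show ?thesis by simp
  next
    case True
    let ?g = "fsub (tdelta (a, 1)) (tdelta (1, a))"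
    let ?U = "{(a, 1), (1, a)}"
    have sub: "{q. ?g q \<noteq> 0} \<subseteq> ?U" by (auto simp: fsub_def tdelta_def split: if_splits)
    have fin: "finite ?U" by simp
    have "Phi n j {q. ?g q \<noteq> 0} ?g = Phi n j ?U ?g" using Phi_supp[OF fin sub] by simp
    also have "\<dots> = Xf ^ (n * j) * coeff a j"
      using j by (simp add: Phi_fsub Phi_tdelta Bf_def coeff_1)
    finally show ?thesis using tensor_inv[OF True f] by simp
  qed
  then show "a \<in> Tset l n" using aS by (simp add: Tset_def)
qed


lemma fsub_self: "fsub a a = (\<lambda>_. 0)" by (simp add: fsub_def)

lemma tr_refl: "fsub a a \<in> tensor_rels A R S"
  by (simp add: fsub_self tensor_rels.zero)

lemma tr_sym: assumes "fsub a b \<in> tensor_rels A R S" shows "fsub b a \<in> tensor_rels A R S"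
proof -
  have "fsub b a = (\<lambda>q. - fsub a b q)" by (auto simp: fsub_def)
  then show ?thesis using tensor_rels.neg[OF assms] by simp
qed

lemma tr_trans: assumes "fsub a b \<in> tensor_rels A R S" "fsub b c \<in> tensor_rels A R S"
  shows "fsub a c \<in> tensor_rels A R S"
proof -
  have "fsub a c = fadd (fsub a b) (fsub b c)" by (auto simp: fsub_def fadd_def)
  then show ?thesis using tensor_rels.add[OF assms] by simp
qed

lemma tr_fadd: assumes "fsub a a' \<in> tensor_rels A R S" "fsub b b' \<in> tensor_rels A R S"
  shows "fsub (fadd a b) (fadd a' b') \<in> tensor_rels A R S"
proof -
  have "fsub (fadd a b) (fadd a' b') = fadd (fsub a a') (fsub b b')" by (auto simp: fsub_def fadd_def)
  then show ?thesis using tensor_rels.add[OF assms] by simp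
qed

lemma tr_addL: assumes "s \<in> S" "s' \<in> S" "t \<in> S"
  shows "fsub (tdelta (s \<oplus>\<^bsub>A\<^esub> s', t)) (fadd (tdelta (s, t)) (tdelta (s', t))) \<in> tensor_rels A R S"
proof -
  have "fsub (tdelta (s \<oplus>\<^bsub>A\<^esub> s', t)) (fadd (tdelta (s, t)) (tdelta (s', t)))
      = fsub (fsub (tdelta (s \<oplus>\<^bsub>A\<^esub> s', t)) (tdelta (s, t))) (tdelta (s', t))"
    by (auto simp: fsub_def fadd_def)
  then show ?thesis using tensor_rels.addL[OF assms] by simp
qed

lemma tr_addR: assumes "s \<in> S" "t \<in> S" "t' \<in> S"
  shows "fsub (tdelta (s, t \<oplus>\<^bsub>A\<^esub> t')) (fadd (tdelta (s, t)) (tdelta (s, t'))) \<in> tensor_rels A R S"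
proof -
  have "fsub (tdelta (s, t \<oplus>\<^bsub>A\<^esub> t')) (fadd (tdelta (s, t)) (tdelta (s, t')))
      = fsub (fsub (tdelta (s, t \<oplus>\<^bsub>A\<^esub> t')) (tdelta (s, t))) (tdelta (s, t'))"
    by (auto simp: fsub_def fadd_def)
  then show ?thesis using tensor_rels.addR[OF assms] by simp
qed

definition Good :: "('a, 'b) ring_scheme \<Rightarrow> 'a set \<Rightarrow> 'a set \<Rightarrow> 'a \<Rightarrow> bool" where
  "Good A R S x \<longleftrightarrow> fsub (tdelta (x, \<one>\<^bsub>A\<^esub>)) (tdelta (\<one>\<^bsub>A\<^esub>, x)) \<in> tensor_rels A R S"

lemma Good_add: assumes "x \<in> S" "y \<in> S" "\<one>\<^bsub>A\<^esub> \<in> S" "Good A R S x" "Good A R S y"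
  shows "Good A R S (x \<oplus>\<^bsub>A\<^esub> y)"
proof -
  have 1: "fsub (tdelta (x \<oplus>\<^bsub>A\<^esub> y, \<one>\<^bsub>A\<^esub>)) (fadd (tdelta (x, \<one>\<^bsub>A\<^esub>)) (tdelta (y, \<one>\<^bsub>A\<^esub>))) \<in> tensor_rels A R S"
    using assms by (intro tr_addL)
  have 2: "fsub (fadd (tdelta (x, \<one>\<^bsub>A\<^esub>)) (tdelta (y, \<one>\<^bsub>A\<^esub>))) (fadd (tdelta (\<one>\<^bsub>A\<^esub>, x)) (tdelta (\<one>\<^bsub>A\<^esub>, y))) \<in> tensor_rels A R S"
    using assms by (intro tr_fadd) (simp_all add: Good_def)
  have 3: "fsub (fadd (tdelta (\<one>\<^bsub>A\<^esub>, x)) (tdelta (\<one>\<^bsub>A\<^esub>, y))) (tdelta (\<one>\<^bsub>A\<^esub>, x \<oplus>\<^bsub>A\<^esub> y)) \<in> tensor_rels A R S"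
    by (rule tr_sym, rule tr_addR) (use assms in auto)
  show ?thesis unfolding Good_def by (rule tr_trans[OF tr_trans[OF 1 2] 3])
qed

lemma Good_R: assumes "r \<in> R" "\<one>\<^bsub>A\<^esub> \<in> S" "r \<otimes>\<^bsub>A\<^esub> \<one>\<^bsub>A\<^esub> = r"
  shows "Good A R S r"
  using tensor_rels.scal[OF assms(1) assms(2) assms(2), of A] assms(3) by (simp add: Good_def)

lemma Good_sum:
  assumes l: "0 < l" and A: "finite A"
    and f: "\<And>i. i \<in> A \<Longrightarrow> f i \<in> Sset l n \<and> Good (Qring l) (Rset l) (Sset l n) (f i)"
  shows "sum f A \<in> Sset l n \<and> Good (Qring l) (Rset l) (Sset l n) (sum f A)"
  using A f
proof (induction A rule: finite_induct)
  case empty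
  have "Good (Qring l) (Rset l) (Sset l n) 0"
    using l by (intro Good_R) (auto simp: Rset_def Qring_simps Sset_1)
  then show ?case using l by (simp add: Sset_0)
next
  case (insert a A)
  then have h: "f a \<in> Sset l n" "Good (Qring l) (Rset l) (Sset l n) (f a)"
    "sum f A \<in> Sset l n" "Good (Qring l) (Rset l) (Sset l n) (sum f A)" by auto
  have "Good (Qring l) (Rset l) (Sset l n) (f a \<oplus>\<^bsub>Qring l\<^esub> sum f A)"
    using h l by (intro Good_add) (simp_all add: Qring_simps Sset_1)
  then show ?case using insert h by (simp add: Qring_simps Sset_add)
qed


definition wz :: "nat \<Rightarrow> 'a::field poly fract \<Rightarrow> nat \<Rightarrow> 'a poly fract poly" where
  "wz n a k = monom (a * inverse Xf ^ (n * k)) k"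

lemma wz_S: "isP a \<Longrightarrow> k < l \<Longrightarrow> wz n a k \<in> Sset l n"
  by (auto simp: wz_def Sset_def degree_monom_lt coeff_monom Xf_cancel)

lemma monom_mult_Q: "i + k < l \<Longrightarrow> monom a i \<otimes>\<^bsub>Qring l\<^esub> monom b k = monom (a * b) (i + k)"
  by (simp add: Qring_simps mult_monom mod_monom_id degree_monom_lt)

lemma Xf_shift: "Xf ^ n * (a * inverse Xf ^ (n * Suc i)) = a * inverse Xf ^ (n * i)"
proof -
  have "Xf ^ n * (a * inverse Xf ^ (n * Suc i)) = Xf ^ n * ((a * inverse Xf ^ (n * i)) * inverse Xf ^ n)"
    by (simp add: power_add mult_ac)
  also have "\<dots> = a * inverse Xf ^ (n * i)" by (rule Xf_cancel)
  finally show ?thesis .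
qed

lemma wz_e1: assumes "Suc i < l" shows "monom 1 1 \<otimes>\<^bsub>Qring l\<^esub> wz n a i = wz n (Xf ^ n * a) (Suc i)"
proof -
  have c: "1 * (a * inverse Xf ^ (n * i)) = Xf ^ n * a * inverse Xf ^ (n * Suc i)"
    by (simp only: mult.assoc mult_1_left Xf_shift)
  show ?thesis unfolding wz_def using assms by (subst monom_mult_Q) (simp_all only: c, simp_all)
qed

lemma wz_e2: assumes "Suc k < l"
  shows "monom 1 1 \<otimes>\<^bsub>Qring l\<^esub> wz n 1 k = [:Xf ^ n:] \<otimes>\<^bsub>Qring l\<^esub> wz n (1 :: 'a::field poly fract) (Suc k)"
proof -
  have c: "1 * (1 * inverse Xf ^ (n * k)) = Xf ^ n * (1 * inverse (Xf :: 'a poly fract) ^ (n * Suc k))"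
    using Xf_shift[of n "1 :: 'a poly fract" k] by simp
  show ?thesis unfolding wz_def monom_0[symmetric] using assms
    by (subst monom_mult_Q, simp, subst monom_mult_Q, simp) (simp only: c, simp)
qed

lemma wz_e3: "i < l \<Longrightarrow> [:Xf ^ n:] \<otimes>\<^bsub>Qring l\<^esub> wz n a i = wz n (Xf ^ n * a) i"
  unfolding wz_def monom_0[symmetric] by (subst monom_mult_Q) (simp_all add: mult.assoc)

lemma wz_0: "wz n a 0 = [:a:]" by (simp add: wz_def monom_0)

lemma y_R: "1 < l \<Longrightarrow> monom 1 1 \<in> Rset l"
  by (auto simp: Rset_def degree_monom1_lt' coeff_monom)

lemma xn_R: "0 < l \<Longrightarrow> [:Xf ^ n:] \<in> Rset l"
  by (rule Rset_const) (auto intro: isP_power)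

lemma wz_step:
  assumes a: "isP a" and ik: "Suc i + k < l"
  shows "fsub (tdelta (wz n (Xf ^ n * a) (Suc i), wz n 1 k)) (tdelta (wz n (Xf ^ n * a) i, wz n 1 (Suc k)))
           \<in> tensor_rels (Qring l) (Rset l) (Sset l n)"
proof -
  have l1: "1 < l" using ik by simp
  have S1: "wz n a i \<in> Sset l n" using a ik by (intro wz_S) auto
  have S2: "wz n 1 k \<in> Sset l n" using ik by (intro wz_S) auto
  have S3: "wz n 1 (Suc k) \<in> Sset l n" using ik by (intro wz_S) auto
  have s1: "fsub (tdelta (monom 1 1 \<otimes>\<^bsub>Qring l\<^esub> wz n a i, wz n 1 k))
                 (tdelta (wz n a i, monom 1 1 \<otimes>\<^bsub>Qring l\<^esub> wz n 1 k)) \<in> tensor_rels (Qring l) (Rset l) (Sset l n)"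
    by (rule tensor_rels.scal[OF y_R[OF l1] S1 S2])
  have s2: "fsub (tdelta ([:Xf ^ n:] \<otimes>\<^bsub>Qring l\<^esub> wz n a i, wz n 1 (Suc k)))
                 (tdelta (wz n a i, [:Xf ^ n:] \<otimes>\<^bsub>Qring l\<^esub> wz n 1 (Suc k))) \<in> tensor_rels (Qring l) (Rset l) (Sset l n)"
    by (rule tensor_rels.scal[OF xn_R S1 S3]) (use l1 in simp)
  have e1: "monom 1 1 \<otimes>\<^bsub>Qring l\<^esub> wz n a i = wz n (Xf ^ n * a) (Suc i)" using ik by (intro wz_e1) simp
  have e2: "monom 1 1 \<otimes>\<^bsub>Qring l\<^esub> wz n 1 k = [:Xf ^ n:] \<otimes>\<^bsub>Qring l\<^esub> wz n 1 (Suc k)" using ik by (intro wz_e2) simp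
  have e3: "[:Xf ^ n:] \<otimes>\<^bsub>Qring l\<^esub> wz n a i = wz n (Xf ^ n * a) i" using ik by (intro wz_e3) simp
  show ?thesis using tr_trans[OF s1[unfolded e1 e2] tr_sym[OF s2[unfolded e3]]] .
qed

lemma wz_chain:
  assumes a: "isP a"
  shows "i + k < l \<Longrightarrow> fsub (tdelta (wz n (Xf ^ n * a) i, wz n 1 k)) (tdelta (wz n (Xf ^ n * a) 0, wz n 1 (i + k)))
           \<in> tensor_rels (Qring l) (Rset l) (Sset l n)"
proof (induction i arbitrary: k)
  case 0
  then show ?case by (simp add: tr_refl)
next
  case (Suc i)
  have "Suc i + k < l" using Suc.prems .
  from tr_trans[OF wz_step[OF a this] Suc.IH[of "Suc k"]] Suc.prems show ?case by simp
qed

lemma wz_Good: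
  assumes a: "isP a" and j: "j < l"
  shows "Good (Qring l) (Rset l) (Sset l n) (wz n (Xf ^ n * a) j)"
proof -
  have l0: "0 < l" using j by simp
  have u: "[:Xf ^ n * a:] \<in> Rset l" using l0 a by (intro Rset_const) (auto intro!: isP_mult isP_power)
  have c1: "fsub (tdelta (wz n (Xf ^ n * a) j, 1)) (tdelta ([:Xf ^ n * a:], wz n 1 j)) \<in> tensor_rels (Qring l) (Rset l) (Sset l n)"
    using wz_chain[OF a, of j 0 l n] j by (simp add: wz_0 monom_0[symmetric] wz_def[of n 1 0])
  have wS: "wz n 1 j \<in> Sset l n" using j by (intro wz_S) auto
  have c2: "fsub (tdelta ([:Xf ^ n * a:] \<otimes>\<^bsub>Qring l\<^esub> 1, wz n 1 j)) (tdelta (1, [:Xf ^ n * a:] \<otimes>\<^bsub>Qring l\<^esub> wz n 1 j)) \<in> tensor_rels (Qring l) (Rset l) (Sset l n)"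
    by (rule tensor_rels.scal[OF u Sset_1[OF l0] wS])
  have e1: "[:Xf ^ n * a:] \<otimes>\<^bsub>Qring l\<^esub> 1 = [:Xf ^ n * a:]" using l0 by (simp add: Qring_simps mod_monom_id)
  have e2: "[:Xf ^ n * a:] \<otimes>\<^bsub>Qring l\<^esub> wz n 1 j = wz n (Xf ^ n * a) j"
    unfolding wz_def monom_0[symmetric] using j by (subst monom_mult_Q) simp_all
  show ?thesis unfolding Good_def Qring_simps(4) using tr_trans[OF c1 c2[unfolded e1 e2]] .
qed


lemma Tset_sub: assumes l: "1 < l"
  shows "Tset l n \<subseteq> strict_closure (Qring l) (Rset l) (Sset l n)"
proof
  fix x assume x: "x \<in> Tset l n"
  have l0: "0 < l" using l by simp
  have xS: "x \<in> Sset l n" using x by (simp add: Tset_def)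
  have xe: "x = (\<Sum>j<l. monom (coeff x j) j)"
  proof (rule poly_eqI)
    fix j show "coeff x j = coeff (\<Sum>j<l. monom (coeff x j) j) j"
      using xS l0 by (simp add: coeff_sum_monom' Sset_def degree_lt_iff)
  qed
  have "(\<Sum>j<l. monom (coeff x j) j) \<in> Sset l n \<and> Good (Qring l) (Rset l) (Sset l n) (\<Sum>j<l. monom (coeff x j) j)"
  proof (rule Good_sum[OF l0])
    fix j assume j: "j \<in> {..<l}"
    show "monom (coeff x j) j \<in> Sset l n \<and> Good (Qring l) (Rset l) (Sset l n) (monom (coeff x j) j)"
    proof (cases "j = 0")
      case True
      have "isP (coeff x 0)" using xS by (auto simp: Sset_def dest: spec[of _ 0])
      then have R: "[:coeff x 0:] \<in> Rset l" using l0 by (rule Rset_const[rotated])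
      have "Good (Qring l) (Rset l) (Sset l n) [:coeff x 0:]"
        using R l0 by (intro Good_R) (simp_all add: Qring_simps Sset_1 mod_monom_id)
      then show ?thesis using True R Rset_sub_Sset by (auto simp: monom_0)
    next
      case False
      then have "divn n (Xf ^ (n * j) * coeff x j)" using x by (simp add: Tset_def)
      then obtain c where c: "Xf ^ (n * j) * coeff x j = Xf ^ n * Fract c 1" by (auto simp: divn_def)
      have e: "monom (coeff x j) j = wz n (Xf ^ n * Fract c 1) j"
        unfolding wz_def using Xf_cancel'[OF c] by simp
      have "isP (Xf ^ n * Fract c 1)" by (intro isP_mult isP_power) simp_all
      then show ?thesis unfolding e using j by (auto intro: wz_S wz_Good)
    qed
  qed simp
  then show "x \<in> strict_closure (Qring l) (Rset l) (Sset l n)"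
    using xS xe by (simp add: strict_closure_def Good_def Qring_simps)
qed

theorem mainTheorem9:
  fixes l n :: nat
  assumes "l \<ge> 3" and "n > 0"
  shows "(Rsub l :: 'k::field poly fract poly set) \<subseteq> Salg l n
    \<and> (Salg l n :: 'k poly fract poly set) \<subseteq> integral_closure (Qring l) (Rsub l)
    \<and> strict_closure (Qring l) (Rsub l) (Salg l n :: 'k poly fract poly set) =
       {r \<oplus>\<^bsub>Qring l\<^esub> finsum (Qring l)
           (\<lambda>i. d i \<otimes>\<^bsub>Qring l\<^esub> ((yQ l [^]\<^bsub>Qring l\<^esub> (i::nat)) \<otimes>\<^bsub>Qring l\<^esub>
                 inv\<^bsub>Qring l\<^esub> (xQ l [^]\<^bsub>Qring l\<^esub> ((i - 1) * n)))) {2..l - 1}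
        | r d. r \<in> Rsub l \<and> (\<forall>i. d i \<in> Dsub l)}"
proof -
  have l0: "0 < l" and l1: "1 < l" and l2: "2 < l" using assms by auto
  have A: "(Rsub l :: 'k::field poly fract poly set) \<subseteq> Salg l n"
    using Rset_sub_Sset by (simp add: Rsub_eq[OF l0] Salg_eq[OF l1])
  have B: "(Salg l n :: 'k poly fract poly set) \<subseteq> integral_closure (Qring l) (Rsub l)"
    using Sset_integral[OF l0] by (auto simp: Salg_eq[OF l1])
  have C: "strict_closure (Qring l) (Rsub l) (Salg l n :: 'k poly fract poly set) = RHS l n"
    unfolding Rsub_eq[OF l0] Salg_eq[OF l1] RHS_eq[OF l2]
    by (rule equalityI[OF strict_sub[OF l0] Tset_sub[OF l1]])
  show ?thesis using A B C by (simp add: RHS_def)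
qed

end
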